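(* Let $E\to M$ be a vector bundle of rank at least $n$ with a pseudo-metric $\langle\cdot,\cdot\rangle$. Let $\widehat{u}^1,\dots,\widehat{u}^n\in\Gamma(E)$ be linearly independent over $C^\infty(M)$, and let $\widehat{Z}_1,\dots,\widehat{Z}_n$ be covariant differential operators on $E$ with symbols $\widehat{z}_i\in\Gamma(TM)$ satisfying $\langle\widehat{Z}_i(e_1),e_2\rangle+\langle e_1,\widehat{Z}_i(e_2)\rangle=\widehat{z}_i\langle e_1,e_2\rangle$. Define $a_E(e)=\sum_i\langle e,\widehat{u}^i\rangle\widehat{z}_i$ and $$e_1\circ e_2=\sum_i\Big(\langle e_1,\widehat{u}^i\rangle\widehat{Z}_i(e_2)-\langle e_2,\widehat{u}^i\rangle\widehat{Z}_i(e_1)+\langle\widehat{Z}_i(e_1),e_2\rangle\widehat{u}^i\Big).$$ Suppose there are $C_{ik}^j\in C^\infty(M)$ such that for all $i,j$: $$\widehat{Z}_i(\widehat{u}^j)=\sum_kC_{ik}^j\widehat{u}^k,\qquad [\widehat{z}_i,\widehat{z}_j]=\sum_k\big(C_{ji}^k-C_{ij}^k\big)\widehat{z}_k,\qquad\langle\widehat{u}^i,\widehat{u}^j\rangle=0.$$ Then $(E,\langle\cdot,\cdot\rangle,\circ,a_E)$ is a pre-Courant algebroid.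
   Context: A covariant differential operator on $E$: $\mathbb{R}$-linear $\widehat{Z}:\Gamma(E)\to\Gamma(E)$ with symbol $\widehat{z}\in\Gamma(TM)$ such that $\widehat{Z}(fe)=f\widehat{Z}(e)+\widehat{z}(f)e$. A pre-Courant algebroid $(E,\langle\cdot,\cdot\rangle,\circ,a_E)$: a bundle map $a_E:E\to TM$ and $\mathbb{R}$-bilinear bracket $\circ$ on $\Gamma(E)$ with $a_E(e)\langle h_1,h_2\rangle=\langle e\circ h_1,h_2\rangle+\langle h_1,e\circ h_2\rangle$, $e\circ e=\tfrac12\mathcal{D}\langle e,e\rangle$ (where $\langle\mathcal{D}(f),e\rangle=a_E(e)(f)$), and $a_E(e_1\circ e_2)=[a_E(e_1),a_E(e_2)]$. *)

theory Defs
  imports Complex_Main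
begin

text \<open>Algebraic (Serre--Swan style) model.  The type 'r plays the role of C-infinity(M)
 (a commutative real algebra), vector fields Gamma(TM) are identified with derivations of 'r,
 and Gamma(E) is a type 's which is an 'r-module via sc.\<close>

definition derivation :: "('r::{comm_ring_1,real_algebra_1} \<Rightarrow> 'r) \<Rightarrow> bool" where
  "derivation X \<longleftrightarrow>
     (\<forall>f g. X (f + g) = X f + X g) \<and>
     (\<forall>(c::real) f. X (c *\<^sub>R f) = c *\<^sub>R X f) \<and>
     (\<forall>f g. X (f * g) = f * X g + X f * g)"

definition vf_scale :: "'r::comm_ring_1 \<Rightarrow> ('r \<Rightarrow> 'r) \<Rightarrow> ('r \<Rightarrow> 'r)" where
  "vf_scale f X = (\<lambda>g. f * X g)"

definition vf_add :: "('r::comm_ring_1 \<Rightarrow> 'r) \<Rightarrow> ('r \<Rightarrow> 'r) \<Rightarrow> ('r \<Rightarrow> 'r)" where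
  "vf_add X Y = (\<lambda>g. X g + Y g)"

definition vf_bracket :: "('r::comm_ring_1 \<Rightarrow> 'r) \<Rightarrow> ('r \<Rightarrow> 'r) \<Rightarrow> ('r \<Rightarrow> 'r)" where
  "vf_bracket X Y = (\<lambda>g. X (Y g) - Y (X g))"

definition pseudo_metric ::
  "('r::{comm_ring_1,real_algebra_1} \<Rightarrow> 's::ab_group_add \<Rightarrow> 's) \<Rightarrow> ('s \<Rightarrow> 's \<Rightarrow> 'r) \<Rightarrow> bool" where
  "pseudo_metric sc g \<longleftrightarrow>
     (\<forall>e1 e2 h. g (e1 + e2) h = g e1 h + g e2 h) \<and>
     (\<forall>f e h. g (sc f e) h = f * g e h) \<and>
     (\<forall>e h. g e h = g h e) \<and>
     (\<forall>e. (\<forall>h. g e h = 0) \<longrightarrow> e = 0)"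

definition cov_diff_op ::
  "('r::{comm_ring_1,real_algebra_1} \<Rightarrow> 's::ab_group_add \<Rightarrow> 's) \<Rightarrow> ('s \<Rightarrow> 's) \<Rightarrow> ('r \<Rightarrow> 'r) \<Rightarrow> bool" where
  "cov_diff_op sc Z z \<longleftrightarrow>
     derivation z \<and>
     (\<forall>e1 e2. Z (e1 + e2) = Z e1 + Z e2) \<and>
     (\<forall>(c::real) e. Z (sc (of_real c) e) = sc (of_real c) (Z e)) \<and>
     (\<forall>f e. Z (sc f e) = sc f (Z e) + sc (z f) e)"

text \<open>The operator D: <D f, e> = a(e)(f) (well defined by nondegeneracy).\<close>
definition D_op :: "('s \<Rightarrow> 's \<Rightarrow> 'r) \<Rightarrow> ('s \<Rightarrow> 'r \<Rightarrow> 'r) \<Rightarrow> 'r \<Rightarrow> 's" where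
  "D_op g a f = (THE d. \<forall>e. g d e = a e f)"

definition pre_courant ::
  "('r::{comm_ring_1,real_algebra_1} \<Rightarrow> 's::ab_group_add \<Rightarrow> 's) \<Rightarrow> ('s \<Rightarrow> 's \<Rightarrow> 'r)
    \<Rightarrow> ('s \<Rightarrow> 's \<Rightarrow> 's) \<Rightarrow> ('s \<Rightarrow> 'r \<Rightarrow> 'r) \<Rightarrow> bool" where
  "pre_courant sc g circ a \<longleftrightarrow>
     module sc \<and> pseudo_metric sc g \<and>
     \<comment> \<open>a is a bundle map E -> TM\<close>
     (\<forall>e. derivation (a e)) \<and>
     (\<forall>e1 e2. a (e1 + e2) = vf_add (a e1) (a e2)) \<and>
     (\<forall>f e. a (sc f e) = vf_scale f (a e)) \<and>
     \<comment> \<open>circ is R-bilinear\<close>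
     (\<forall>e1 e2 h. circ (e1 + e2) h = circ e1 h + circ e2 h) \<and>
     (\<forall>e h1 h2. circ e (h1 + h2) = circ e h1 + circ e h2) \<and>
     (\<forall>(c::real) e h. circ (sc (of_real c) e) h = sc (of_real c) (circ e h)) \<and>
     (\<forall>(c::real) e h. circ e (sc (of_real c) h) = sc (of_real c) (circ e h)) \<and>
     \<comment> \<open>axioms\<close>
     (\<forall>e h1 h2. a e (g h1 h2) = g (circ e h1) h2 + g h1 (circ e h2)) \<and>
     (\<forall>e. circ e e = sc (of_real (1/2)) (D_op g a (g e e))) \<and>
     (\<forall>e1 e2. a (circ e1 e2) = vf_bracket (a e1) (a e2))"

definition anchor_of ::
  "('s \<Rightarrow> 's \<Rightarrow> 'r::comm_ring_1) \<Rightarrow> nat \<Rightarrow> (nat \<Rightarrow> 's) \<Rightarrow> (nat \<Rightarrow> 'r \<Rightarrow> 'r) \<Rightarrow> 's \<Rightarrow> 'r \<Rightarrow> 'r" where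
  "anchor_of g n u z e = (\<lambda>f. \<Sum>i<n. g e (u i) * z i f)"

definition circ_of ::
  "('r::comm_ring_1 \<Rightarrow> 's::ab_group_add \<Rightarrow> 's) \<Rightarrow> ('s \<Rightarrow> 's \<Rightarrow> 'r) \<Rightarrow> nat \<Rightarrow> (nat \<Rightarrow> 's)
     \<Rightarrow> (nat \<Rightarrow> 's \<Rightarrow> 's) \<Rightarrow> 's \<Rightarrow> 's \<Rightarrow> 's" where
  "circ_of sc g n u Z e1 e2 =
     (\<Sum>i<n. sc (g e1 (u i)) (Z i e2) - sc (g e2 (u i)) (Z i e1) + sc (g (Z i e1) e2) (u i))"

end

theory Submission
  imports Defs
begin

lemma deriv_sum:
  assumes "derivation X"
  shows "X (sum h A) = (\<Sum>x\<in>A. X (h x))"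
proof -
  interpret additive X
    by standard (use assms in \<open>simp add: derivation_def\<close>)
  show ?thesis by (rule sum)
qed

lemma deriv_add: "derivation X \<Longrightarrow> X (f + h) = X f + X h"
  by (simp add: derivation_def)
lemma deriv_mult: "derivation X \<Longrightarrow> X (f * h) = f * X h + X f * h"
  by (simp add: derivation_def)
lemma deriv_scaleR: "derivation X \<Longrightarrow> X (c *\<^sub>R f) = c *\<^sub>R X f"
  by (simp add: derivation_def)

lemma swap3a: "(\<Sum>k\<in>A. \<Sum>i\<in>A. \<Sum>j\<in>A. F i j k) = (\<Sum>i\<in>A. \<Sum>j\<in>A. \<Sum>k\<in>A. (F i j k :: 'a::comm_monoid_add))"
proof -
  have "(\<Sum>k\<in>A. \<Sum>i\<in>A. \<Sum>j\<in>A. F i j k) = (\<Sum>i\<in>A. \<Sum>k\<in>A. \<Sum>j\<in>A. F i j k)"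
    by (rule sum.swap)
  also have "\<dots> = (\<Sum>i\<in>A. \<Sum>j\<in>A. \<Sum>k\<in>A. F i j k)"
    by (rule sum.cong[OF refl], rule sum.swap)
  finally show ?thesis .
qed

lemma swap3b: "(\<Sum>k\<in>A. \<Sum>j\<in>A. \<Sum>i\<in>A. F i j k) = (\<Sum>i\<in>A. \<Sum>j\<in>A. \<Sum>k\<in>A. (F i j k :: 'a::comm_monoid_add))"
proof -
  have "(\<Sum>k\<in>A. \<Sum>j\<in>A. \<Sum>i\<in>A. F i j k) = (\<Sum>k\<in>A. \<Sum>i\<in>A. \<Sum>j\<in>A. F i j k)"
    by (rule sum.cong[OF refl], rule sum.swap)
  also have "\<dots> = (\<Sum>i\<in>A. \<Sum>j\<in>A. \<Sum>k\<in>A. F i j k)" by (rule swap3a)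
  finally show ?thesis .
qed

locale P312 = module sc
  for sc :: "'r::{comm_ring_1,real_algebra_1} \<Rightarrow> 's::ab_group_add \<Rightarrow> 's" +
  fixes g :: "'s \<Rightarrow> 's \<Rightarrow> 'r"
    and n :: nat
    and u :: "nat \<Rightarrow> 's"
    and Z :: "nat \<Rightarrow> 's \<Rightarrow> 's"
    and z :: "nat \<Rightarrow> 'r \<Rightarrow> 'r"
    and C :: "nat \<Rightarrow> nat \<Rightarrow> nat \<Rightarrow> 'r"
  assumes pm: "pseudo_metric sc g"
    and cov: "\<And>i. i < n \<Longrightarrow> cov_diff_op sc (Z i) (z i)"
    and compat: "\<And>i e1 e2. i < n \<Longrightarrow> g (Z i e1) e2 + g e1 (Z i e2) = z i (g e1 e2)"
    and Zu: "\<And>i j. i < n \<Longrightarrow> j < n \<Longrightarrow> Z i (u j) = (\<Sum>k<n. sc (C i k j) (u k))"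
    and brk: "\<And>i j. i < n \<Longrightarrow> j < n \<Longrightarrow>
               vf_bracket (z i) (z j) = (\<lambda>f. \<Sum>k<n. (C j i k - C i j k) * z k f)"
    and iso: "\<And>i j. i < n \<Longrightarrow> j < n \<Longrightarrow> g (u i) (u j) = 0"
begin

lemma g_add1: "g (e1 + e2) h = g e1 h + g e2 h"
  using pm unfolding pseudo_metric_def by blast
lemma g_sc1: "g (sc f e) h = f * g e h"
  using pm unfolding pseudo_metric_def by blast
lemma g_sym: "g e h = g h e"
  using pm by (simp add: pseudo_metric_def)
lemma g_nondeg: "(\<And>h. g e h = 0) \<Longrightarrow> e = 0"
  using pm by (simp add: pseudo_metric_def)
lemma g_add2: "g h (e1 + e2) = g h e1 + g h e2"
  by (metis g_add1 g_sym)
lemma g_sc2: "g h (sc f e) = f * g h e"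
  by (metis g_sc1 g_sym)

lemma g_sum1: "g (sum e A) h = (\<Sum>x\<in>A. g (e x) h)"
proof -
  interpret additive "\<lambda>x. g x h" by standard (rule g_add1)
  show ?thesis by (rule sum)
qed
lemma g_diff1: "g (e1 - e2) h = g e1 h - g e2 h"
proof -
  interpret additive "\<lambda>x. g x h" by standard (rule g_add1)
  show ?thesis by (rule diff)
qed
lemma g_sum2: "g h (sum e A) = (\<Sum>x\<in>A. g h (e x))"
proof -
  interpret additive "\<lambda>x. g h x" by standard (rule g_add2)
  show ?thesis by (rule sum)
qed
lemma g_diff2: "g h (e1 - e2) = g h e1 - g h e2"
proof -
  interpret additive "\<lambda>x. g h x" by standard (rule g_add2)
  show ?thesis by (rule diff)
qed

lemma z_der: "i < n \<Longrightarrow> derivation (z i)"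
  using cov by (simp add: cov_diff_op_def)
lemma Z_add: "i < n \<Longrightarrow> Z i (e1 + e2) = Z i e1 + Z i e2"
  using cov by (simp add: cov_diff_op_def)
lemma Z_R: "i < n \<Longrightarrow> Z i (sc (of_real c) e) = sc (of_real c) (Z i e)"
  using cov unfolding cov_diff_op_def by blast

lemma anchor_der: "derivation (anchor_of g n u z e)"
proof -
  have d: "\<And>i. i \<in> {..<n} \<Longrightarrow> derivation (z i)" using z_der by simp
  show ?thesis
    unfolding derivation_def anchor_of_def
  proof (intro conjI allI)
    fix f h :: 'r
    show "(\<Sum>i<n. g e (u i) * z i (f + h)) = (\<Sum>i<n. g e (u i) * z i f) + (\<Sum>i<n. g e (u i) * z i h)"
      by (simp add: deriv_add[OF d] distrib_left sum.distrib)
    show "(\<Sum>i<n. g e (u i) * z i (f * h)) = f * (\<Sum>i<n. g e (u i) * z i h) + (\<Sum>i<n. g e (u i) * z i f) * h"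
      by (simp add: deriv_mult[OF d] distrib_left sum.distrib sum_distrib_left sum_distrib_right algebra_simps)
  next
    fix c :: real and f :: 'r
    show "(\<Sum>i<n. g e (u i) * z i (c *\<^sub>R f)) = c *\<^sub>R (\<Sum>i<n. g e (u i) * z i f)"
      by (simp add: deriv_scaleR[OF d] scaleR_sum_right)
  qed
qed

lemma anchor_add: "anchor_of g n u z (e1 + e2) = vf_add (anchor_of g n u z e1) (anchor_of g n u z e2)"
  by (simp add: anchor_of_def vf_add_def g_add1 distrib_right sum.distrib)

lemma anchor_sc: "anchor_of g n u z (sc f e) = vf_scale f (anchor_of g n u z e)"
  by (simp add: anchor_of_def vf_scale_def g_sc1 sum_distrib_left mult.assoc)

lemma circ_add1: "circ_of sc g n u Z (e1 + e2) h = circ_of sc g n u Z e1 h + circ_of sc g n u Z e2 h"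
  unfolding circ_of_def sum.distrib[symmetric]
  by (rule sum.cong) (simp_all add: Z_add g_add1 g_add2 scale_left_distrib scale_right_distrib algebra_simps)

lemma circ_add2: "circ_of sc g n u Z e (h1 + h2) = circ_of sc g n u Z e h1 + circ_of sc g n u Z e h2"
  unfolding circ_of_def sum.distrib[symmetric]
  by (rule sum.cong) (simp_all add: Z_add g_add1 g_add2 scale_left_distrib scale_right_distrib algebra_simps)

lemma circ_R1: "circ_of sc g n u Z (sc (of_real c) e) h = sc (of_real c) (circ_of sc g n u Z e h)"
  unfolding circ_of_def scale_sum_right
  by (rule sum.cong) (simp_all add: Z_R g_sc1 g_sc2 scale_right_distrib scale_right_diff_distrib mult.commute)

lemma circ_R2: "circ_of sc g n u Z e (sc (of_real c) h) = sc (of_real c) (circ_of sc g n u Z e h)"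
  unfolding circ_of_def scale_sum_right
  by (rule sum.cong) (simp_all add: Z_R g_sc1 g_sc2 scale_right_distrib scale_right_diff_distrib mult.commute)

lemma metric_compat: "anchor_of g n u z e (g h1 h2) =
   g (circ_of sc g n u Z e h1) h2 + g h1 (circ_of sc g n u Z e h2)"
proof -
  have "\<And>i. i \<in> {..<n} \<Longrightarrow> g e (u i) * z i (g h1 h2) =
     (g e (u i) * g (Z i h1) h2 - g h1 (u i) * g (Z i e) h2 + g (Z i e) h1 * g (u i) h2)
   + (g e (u i) * g h1 (Z i h2) - g h2 (u i) * g h1 (Z i e) + g (Z i e) h2 * g h1 (u i))"
  proof -
    fix i assume "i \<in> {..<n}"
    then have "z i (g h1 h2) = g (Z i h1) h2 + g h1 (Z i h2)" using compat by simp
    then show "?thesis i"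
      by (simp add: algebra_simps g_sym[of h2 "u i"] g_sym[of h1 "Z i e"] g_sym[of h1 "u i"])
  qed
  then show ?thesis
    unfolding anchor_of_def circ_of_def
    by (simp add: g_sum1 g_sum2 g_diff1 g_diff2 g_add1 g_add2 g_sc1 g_sc2 sum.distrib[symmetric])
qed

lemma D_eq: "D_op g (anchor_of g n u z) f = (\<Sum>i<n. sc (z i f) (u i))"
  unfolding D_op_def
proof (rule the_equality)
  show "\<forall>e. g (\<Sum>i<n. sc (z i f) (u i)) e = anchor_of g n u z e f"
    by (simp add: anchor_of_def g_sum1 g_sc1 g_sym[of "u _"] mult.commute)
next
  fix d assume d: "\<forall>e. g d e = anchor_of g n u z e f"
  have "\<forall>e. g (\<Sum>i<n. sc (z i f) (u i)) e = anchor_of g n u z e f"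
    by (simp add: anchor_of_def g_sum1 g_sc1 g_sym[of "u _"] mult.commute)
  with d have "\<And>h. g (d - (\<Sum>i<n. sc (z i f) (u i))) h = 0"
    by (simp add: g_diff1)
  then have "d - (\<Sum>i<n. sc (z i f) (u i)) = 0" by (rule g_nondeg)
  then show "d = (\<Sum>i<n. sc (z i f) (u i))" by simp
qed

lemma half: "(x::'r) + x = y \<Longrightarrow> x = of_real (1/2) * y"
proof -
  assume "x + x = y"
  then have "y = of_real 2 * x" by (simp add: algebra_simps mult_2)
  then have "of_real (1/2) * y = (of_real (1/2) * of_real 2) * x" by (simp add: mult.assoc)
  also have "\<dots> = x"
  proof -
    have "of_real (1/2) * of_real 2 = (of_real (1/2 * 2) :: 'r)" by (simp only: of_real_mult)
    then have "of_real (1/2) * of_real 2 = (1 :: 'r)" by simp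
    then show ?thesis by simp
  qed
  finally show ?thesis by simp
qed

lemma circ_self: "circ_of sc g n u Z e e = sc (of_real (1/2)) (D_op g (anchor_of g n u z) (g e e))"
  unfolding D_eq circ_of_def scale_sum_right scale_scale
proof (rule sum.cong)
  fix i assume "i \<in> {..<n}"
  then have "g (Z i e) e + g (Z i e) e = z i (g e e)" using compat[of i e e] by (simp add: g_sym[of e "Z i e"])
  then have "g (Z i e) e = of_real (1/2) * z i (g e e)" by (rule half)
  then show "sc (g e (u i)) (Z i e) - sc (g e (u i)) (Z i e) + sc (g (Z i e) e) (u i) =
         sc (of_real (1/2) * z i (g e e)) (u i)" by simp
qed simp

lemma gZu: "i < n \<Longrightarrow> j < n \<Longrightarrow> g (Z i e) (u j) = z i (g e (u j)) - (\<Sum>k<n. C i k j * g e (u k))"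
proof -
  assume ij: "i < n" "j < n"
  have "g e (Z i (u j)) = (\<Sum>k<n. C i k j * g e (u k))"
    using ij by (simp add: Zu g_sum2 g_sc2)
  with compat[OF ij(1), of e "u j"] show ?thesis by (simp add: algebra_simps)
qed

lemma bracket:
  "anchor_of g n u z (circ_of sc g n u Z e1 e2) f =
   vf_bracket (anchor_of g n u z e1) (anchor_of g n u z e2) f"
proof -
  define a where "a i = g e1 (u i)" for i
  define b where "b i = g e2 (u i)" for i
  define T1 where "T1 = (\<Sum>i<n. \<Sum>j<n. a i * z i (b j) * z j f - b i * z i (a j) * z j f)"
  define T3 where "T3 = (\<Sum>i<n. \<Sum>j<n. \<Sum>k<n. a i * b j * C j i k * z k f)"
  define T4 where "T4 = (\<Sum>i<n. \<Sum>j<n. \<Sum>k<n. a i * b j * C i j k * z k f)"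
  have gc: "g (circ_of sc g n u Z e1 e2) (u j) =
     (\<Sum>i<n. a i * (z i (b j) - (\<Sum>k<n. C i k j * b k)) - b i * (z i (a j) - (\<Sum>k<n. C i k j * a k)))"
    if "j < n" for j
    unfolding circ_of_def g_sum1
  proof (rule sum.cong[OF refl])
    fix i assume "i \<in> {..<n}"
    then have i: "i < n" by simp
    show "g (sc (g e1 (u i)) (Z i e2) - sc (g e2 (u i)) (Z i e1) + sc (g (Z i e1) e2) (u i)) (u j) =
      a i * (z i (b j) - (\<Sum>k<n. C i k j * b k)) - b i * (z i (a j) - (\<Sum>k<n. C i k j * a k))"
      using i that by (simp add: g_add1 g_diff1 g_sc1 gZu iso a_def b_def)
  qed
  have L: "anchor_of g n u z (circ_of sc g n u Z e1 e2) f = T1 - T4 + T3"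
  proof -
    have "anchor_of g n u z (circ_of sc g n u Z e1 e2) f =
      (\<Sum>j<n. (\<Sum>i<n. a i * (z i (b j) - (\<Sum>k<n. C i k j * b k)) - b i * (z i (a j) - (\<Sum>k<n. C i k j * a k))) * z j f)"
      unfolding anchor_of_def by (rule sum.cong[OF refl]) (simp add: gc)
    also have "\<dots> = (\<Sum>j<n. \<Sum>i<n. a i * z i (b j) * z j f - b i * z i (a j) * z j f)
       - (\<Sum>j<n. \<Sum>i<n. \<Sum>k<n. a i * C i k j * b k * z j f)
       + (\<Sum>j<n. \<Sum>i<n. \<Sum>k<n. b i * C i k j * a k * z j f)"
      by (simp add: sum_distrib_left sum_distrib_right sum_subtractf sum.distrib algebra_simps)
    also have "(\<Sum>j<n. \<Sum>i<n. a i * z i (b j) * z j f - b i * z i (a j) * z j f) = T1"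
      unfolding T1_def by (rule sum.swap)
    also have "(\<Sum>j<n. \<Sum>i<n. \<Sum>k<n. a i * C i k j * b k * z j f) = T4"
      unfolding T4_def using swap3a[of "\<lambda>i j k. a i * b j * C i j k * z k f" "{..<n}"]
      by (simp add: mult_ac)
    also have "(\<Sum>j<n. \<Sum>i<n. \<Sum>k<n. b i * C i k j * a k * z j f) = T3"
      unfolding T3_def using swap3b[of "\<lambda>i j k. a i * b j * C j i k * z k f" "{..<n}"]
      by (simp add: mult_ac)
    finally show ?thesis .
  qed
  have R: "vf_bracket (anchor_of g n u z e1) (anchor_of g n u z e2) f = T1 + T3 - T4"
  proof -
    have zs: "z i (\<Sum>j<n. c j * z j f) = (\<Sum>j<n. c j * z i (z j f) + z i (c j) * z j f)" if "i < n" for i c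
      using that by (simp add: deriv_sum[OF z_der] deriv_mult[OF z_der] algebra_simps)
    have "vf_bracket (anchor_of g n u z e1) (anchor_of g n u z e2) f =
      (\<Sum>i<n. a i * (\<Sum>j<n. b j * z i (z j f) + z i (b j) * z j f)) -
      (\<Sum>i<n. b i * (\<Sum>j<n. a j * z i (z j f) + z i (a j) * z j f))"
      unfolding vf_bracket_def anchor_of_def a_def[symmetric] b_def[symmetric]
      by (simp add: zs)
    also have "\<dots> = T1 + ((\<Sum>i<n. \<Sum>j<n. a i * b j * z i (z j f)) - (\<Sum>i<n. \<Sum>j<n. b i * a j * z i (z j f)))"
      unfolding T1_def
      by (simp add: sum_distrib_left sum_distrib_right sum_subtractf sum.distrib algebra_simps)
    also have "(\<Sum>i<n. \<Sum>j<n. b i * a j * z i (z j f)) = (\<Sum>i<n. \<Sum>j<n. a i * b j * z j (z i f))"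
      by (subst sum.swap) (simp add: mult_ac)
    also have "(\<Sum>i<n. \<Sum>j<n. a i * b j * z i (z j f)) - (\<Sum>i<n. \<Sum>j<n. a i * b j * z j (z i f))
       = (\<Sum>i<n. \<Sum>j<n. a i * b j * (\<Sum>k<n. (C j i k - C i j k) * z k f))"
    proof -
      have "\<And>i j. i < n \<Longrightarrow> j < n \<Longrightarrow> z i (z j f) - z j (z i f) = (\<Sum>k<n. (C j i k - C i j k) * z k f)"
        using brk by (simp add: vf_bracket_def fun_eq_iff)
      then show ?thesis
        by (simp add: sum_subtractf[symmetric] right_diff_distrib[symmetric])
    qed
    also have "\<dots> = T3 - T4"
      unfolding T3_def T4_def
      by (simp add: sum_distrib_left sum_subtractf algebra_simps)
    finally show ?thesis by simp
  qed
  from L R show ?thesis by simp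
qed

end


theorem proposition3p12:
  fixes sc :: "'r::{comm_ring_1,real_algebra_1} \<Rightarrow> 's::ab_group_add \<Rightarrow> 's"
    and g :: "'s \<Rightarrow> 's \<Rightarrow> 'r"
    and n :: nat
    and u :: "nat \<Rightarrow> 's"
    and Z :: "nat \<Rightarrow> 's \<Rightarrow> 's"
    and z :: "nat \<Rightarrow> 'r \<Rightarrow> 'r"
    and C :: "nat \<Rightarrow> nat \<Rightarrow> nat \<Rightarrow> 'r"
  assumes "module sc"
    and "pseudo_metric sc g"
    and indep: "\<And>c. (\<Sum>i<n. sc (c i) (u i)) = 0 \<Longrightarrow> \<forall>i<n. c i = 0"
    and cov: "\<And>i. i < n \<Longrightarrow> cov_diff_op sc (Z i) (z i)"
    and compat: "\<And>i e1 e2. i < n \<Longrightarrow> g (Z i e1) e2 + g e1 (Z i e2) = z i (g e1 e2)"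
    and Zu: "\<And>i j. i < n \<Longrightarrow> j < n \<Longrightarrow> Z i (u j) = (\<Sum>k<n. sc (C i k j) (u k))"
    and brk: "\<And>i j. i < n \<Longrightarrow> j < n \<Longrightarrow>
               vf_bracket (z i) (z j) = (\<lambda>f. \<Sum>k<n. (C j i k - C i j k) * z k f)"
    and iso: "\<And>i j. i < n \<Longrightarrow> j < n \<Longrightarrow> g (u i) (u j) = 0"
  shows "pre_courant sc g (circ_of sc g n u Z) (anchor_of g n u z)"
proof -
  interpret P: P312 sc g n u Z z C
    using assms unfolding P312_def P312_axioms_def by blast
  show ?thesis
    unfolding pre_courant_def
    using assms(1,2) P.anchor_der P.anchor_add P.anchor_sc P.circ_add1 P.circ_add2
      P.circ_R1 P.circ_R2 P.metric_compat P.circ_self P.bracket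
    by (simp add: fun_eq_iff)
qed

end
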